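(* Let $M$ be a Riemannian manifold. Let $e_1,e_2$ be paths in $M$ from $p_1$ to $p_2$ of lengths $l_1,l_2$. Suppose the loop $\alpha=e_1*\bar e_2$ based at $p_1$ can be contracted to $p_1$ through loops $\alpha_\tau$ based at $p_1$ of length at most $l_3$. Then $e_1$ is path-homotopic to $e_2$ through curves of length at most $\min\{l_1,l_2\}+l_3$. Moreover (parametric version): let $X$ be a manifold and $\{e_1^x\}_{x\in X}$, $\{e_2^x\}_{x\in X}$ continuous families of paths from $p_1(x)$ to $p_2(x)$ of lengths $l_1(x),l_2(x)$, and suppose there is a continuous family of contractions of the loops $e_1^x*\bar e_2^x$ through loops based at $p_1(x)$ of length at most $l_3(x)$. Then there is a continuous family of path homotopies from $e_1^x$ to $e_2^x$ through curves of length at most $\min_{i=1,2}\max_{x\in X}(l_i(x)+l_3(x))$.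
   Context: $*$ denotes concatenation of paths and $\bar\beta$ denotes the path $\beta$ traversed in the opposite direction. A path homotopy fixes endpoints. *)

theory Defs
  imports "HOL-Analysis.Analysis"
begin

text \<open>For a Riemannian manifold with its Riemannian distance this is the Riemannian length.\<close>
definition curve_length :: "(real \<Rightarrow> 'a::metric_space) \<Rightarrow> ereal" where
  "curve_length g =
     (SUP ts \<in> {ts. sorted ts \<and> set ts \<subseteq> {0..1}}.
        ereal (\<Sum>i < length ts - 1. dist (g (ts ! i)) (g (ts ! Suc i))))"

end

theory Submission
  imports Defs
begin

definition cvar :: "(real \<Rightarrow> 'a::metric_space) \<Rightarrow> real \<Rightarrow> real \<Rightarrow> ereal" where
  "cvar g a b = (SUP ts \<in> {ts. sorted ts \<and> set ts \<subseteq> {a..b}}.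
        ereal (\<Sum>i < length ts - 1. dist (g (ts ! i)) (g (ts ! Suc i))))"

fun psum :: "(real \<Rightarrow> 'a::metric_space) \<Rightarrow> real list \<Rightarrow> real" where
  "psum f (x # y # xs) = dist (f x) (f y) + psum f (y # xs)"
| "psum f _ = 0"

lemma sum_psum: "(\<Sum>i < length ts - 1. dist (f (ts ! i)) (f (ts ! Suc i))) = psum f ts"
  by (induction f ts rule: psum.induct) (simp_all add: sum.lessThan_Suc_shift del: sum.lessThan_Suc)

lemma cvar_psum: "cvar g a b = (SUP ts \<in> {ts. sorted ts \<and> set ts \<subseteq> {a..b}}. ereal (psum g ts))"
  unfolding cvar_def sum_psum by (rule refl)

lemma curve_length_cvar: "curve_length g = cvar g 0 1"
  by (simp add: curve_length_def cvar_def)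

lemma cvar_ge: "sorted ts \<Longrightarrow> set ts \<subseteq> {a..b} \<Longrightarrow> ereal (psum g ts) \<le> cvar g a b"
  unfolding cvar_psum by (rule SUP_upper) auto

lemma cvar_le: "(\<And>ts. sorted ts \<Longrightarrow> set ts \<subseteq> {a..b} \<Longrightarrow> ereal (psum g ts) \<le> M) \<Longrightarrow> cvar g a b \<le> M"
  unfolding cvar_psum by (rule SUP_least) auto

lemma cvar_nonneg: "0 \<le> cvar g a b"
  using cvar_ge[of "[]" a b g] by (simp add: zero_ereal_def)

lemma psum_cong: "(\<forall>t\<in>set ts. f t = g t) \<Longrightarrow> psum f ts = psum g ts"
  by (induction f ts rule: psum.induct) auto

lemma psum_map: "psum f (map g ts) = psum (\<lambda>t. f (g t)) ts"
  by (induction ts rule: induct_list012) auto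

lemma psum_snoc2: "psum f (xs @ [a, b]) = psum f (xs @ [a]) + dist (f a) (f b)"
  by (induction xs rule: induct_list012) auto

lemma psum_rev: "psum f (rev xs) = psum f xs"
proof (induction xs rule: induct_list012)
  case (3 x y zs)
  have "psum f (rev (x # y # zs)) = psum f (rev zs @ [y, x])" by simp
  also have "\<dots> = psum f (rev (y # zs)) + dist (f y) (f x)" by (simp add: psum_snoc2)
  also have "\<dots> = psum f (x # y # zs)" using 3 by (simp add: dist_commute)
  finally show ?case .
qed auto

lemma psum_split: "psum f (xs @ ys) \<le> psum f (xs @ [b]) + psum f (b # ys)"
proof (induction xs rule: induct_list012)
  case 1
  then show ?case by (cases ys) auto
next
  case (2 x)
  then show ?case
  proof (cases ys)
    case (Cons y ys')
    then show ?thesis using dist_triangle[of "f x" "f y" "f b"] by simp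
  qed auto
next
  case (3 x y zs)
  then show ?case by simp
qed

lemma psum_const: "(\<forall>t\<in>set ts. f t = c) \<Longrightarrow> psum f ts = 0"
  by (induction f ts rule: psum.induct) auto

lemma dropWhile_gt: "sorted ts \<Longrightarrow> y \<in> set (dropWhile (\<lambda>t. t \<le> b) ts) \<Longrightarrow> b < (y::real)"
  by (induction ts) (auto split: if_splits)

lemma cvar_split:
  assumes "a \<le> b" "b \<le> c"
  shows "cvar F a c \<le> cvar F a b + cvar F b c"
proof (rule cvar_le)
  fix ts :: "real list" assume ts: "sorted ts" "set ts \<subseteq> {a..c}"
  define xs where "xs = takeWhile (\<lambda>t. t \<le> b) ts"
  define ys where "ys = dropWhile (\<lambda>t. t \<le> b) ts"
  have tsx: "ts = xs @ ys" by (simp add: xs_def ys_def)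
  have xsb: "\<forall>x\<in>set xs. x \<le> b" unfolding xs_def by (auto dest: set_takeWhileD)
  have ysb: "\<forall>y\<in>set ys. b < y" unfolding ys_def using dropWhile_gt[OF ts(1)] by blast
  have s: "sorted xs" "sorted ys" using ts(1) tsx sorted_append by metis+
  have A: "ereal (psum F (xs @ [b])) \<le> cvar F a b"
    apply (rule cvar_ge)
    using s xsb ts(2) assms unfolding tsx by (auto simp: sorted_append)
  have B: "ereal (psum F (b # ys)) \<le> cvar F b c"
    apply (rule cvar_ge)
    using s ysb ts(2) assms unfolding tsx by (auto simp: less_imp_le)
  have "ereal (psum F ts) \<le> ereal (psum F (xs @ [b])) + ereal (psum F (b # ys))"
    unfolding tsx using psum_split[of F xs ys b] by simp
  also have "\<dots> \<le> cvar F a b + cvar F b c" using A B by (rule add_mono)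
  finally show "ereal (psum F ts) \<le> cvar F a b + cvar F b c" .
qed

lemma cvar_mono_comp:
  assumes "\<forall>u\<in>{a..b}. \<forall>v\<in>{a..b}. u \<le> v \<longrightarrow> g u \<le> g v"
    and "g ` {a..b} \<subseteq> {c..d}" and "\<forall>t\<in>{a..b}. F t = f (g t)"
  shows "cvar F a b \<le> cvar f c d"
proof (rule cvar_le)
  fix ts :: "real list" assume ts: "sorted ts" "set ts \<subseteq> {a..b}"
  have "psum F ts = psum (\<lambda>t. f (g t)) ts" using assms(3) ts(2) by (intro psum_cong) blast
  also have "\<dots> = psum f (map g ts)" by (simp add: psum_map)
  finally have e: "psum F ts = psum f (map g ts)" .
  have "sorted (map g ts)" unfolding sorted_map
  proof (rule sorted_wrt_mono_rel[of _ "(\<le>)"])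
    fix x y assume "x \<in> set ts" "y \<in> set ts" "x \<le> y"
    then show "g x \<le> g y" using ts(2) assms(1) by blast
  qed (use ts(1) in simp)
  moreover have "set (map g ts) \<subseteq> {c..d}" using ts(2) assms(2) by auto
  ultimately show "ereal (psum F ts) \<le> cvar f c d" unfolding e by (rule cvar_ge)
qed

lemma cvar_anti_comp:
  assumes "\<forall>u\<in>{a..b}. \<forall>v\<in>{a..b}. u \<le> v \<longrightarrow> g v \<le> g u"
    and "g ` {a..b} \<subseteq> {c..d}" and "\<forall>t\<in>{a..b}. F t = f (g t)"
  shows "cvar F a b \<le> cvar f c d"
proof (rule cvar_le)
  fix ts :: "real list" assume ts: "sorted ts" "set ts \<subseteq> {a..b}"
  have "psum F ts = psum (\<lambda>t. f (g t)) ts" using assms(3) ts(2) by (intro psum_cong) blast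
  also have "\<dots> = psum f (map g ts)" by (simp add: psum_map)
  also have "\<dots> = psum f (rev (map g ts))" by (simp add: psum_rev)
  finally have e: "psum F ts = psum f (rev (map g ts))" .
  have "sorted_wrt (\<lambda>x y. g y \<le> g x) ts"
  proof (rule sorted_wrt_mono_rel[of _ "(\<le>)"])
    fix x y assume "x \<in> set ts" "y \<in> set ts" "x \<le> y"
    then show "g y \<le> g x" using ts(2) assms(1) by blast
  qed (use ts(1) in simp)
  then have "sorted (rev (map g ts))" by (simp add: sorted_wrt_rev sorted_wrt_map)
  moreover have "set (rev (map g ts)) \<subseteq> {c..d}" using ts(2) assms(2) by auto
  ultimately show "ereal (psum F ts) \<le> cvar f c d" unfolding e by (rule cvar_ge)
qed

lemma cvar_subint: "c \<le> a \<Longrightarrow> b \<le> d \<Longrightarrow> cvar f a b \<le> cvar f c d"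
  unfolding cvar_psum by (rule SUP_subset_mono) auto

lemma cvar_const: "\<forall>t\<in>{a..b}. F t = p \<Longrightarrow> cvar F a b \<le> 0"
  by (rule cvar_le) (subst psum_const[of _ F p], auto)


definition clp :: "real \<Rightarrow> real" where "clp x = max 0 (min 1 x)"
definition gk :: "real \<Rightarrow> real" where "gk s = 1/2 + 5/2 * clp (5 * s)"
definition gsig :: "real \<Rightarrow> real" where "gsig s = clp (5 * s - 1)"
definition glam :: "real \<Rightarrow> real" where "glam s = clp (5 * s - 2)"
definition gmu :: "real \<Rightarrow> real" where "gmu s = clp (5 * s - 3)"
definition gd :: "real \<Rightarrow> real" where "gd s = 3/2 - clp (5 * s - 4)"
definition GS :: "real \<Rightarrow> real \<Rightarrow> real" where
  "GS s t = gsig s * (1 - gmu s) * clp (2 - 3 * t)"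
definition GT :: "real \<Rightarrow> real \<Rightarrow> real" where
  "GT s t = min (max (gk s * t) (glam s)) (min 1 (1/2 + gd s * (1 - t)))"

lemma clp_range: "0 \<le> clp x" "clp x \<le> 1"
  by (auto simp: clp_def)

lemma clp_low: "x \<le> 0 \<Longrightarrow> clp x = 0" and clp_high: "1 \<le> x \<Longrightarrow> clp x = 1"
  and clp_mid: "0 \<le> x \<Longrightarrow> x \<le> 1 \<Longrightarrow> clp x = x"
  by (auto simp: clp_def)

lemma gk_range: "1/2 \<le> gk s" "gk s \<le> 3"
  using clp_range[of "5 * s"] by (auto simp: gk_def)

lemma gd_range: "1/2 \<le> gd s" "gd s \<le> 3/2"
  using clp_range[of "5 * s-4"] by (auto simp: gd_def)

lemma GS_range: "0 \<le> GS s t" "GS s t \<le> 1"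
proof -
  have a: "0 \<le> gsig s" "gsig s \<le> 1" "0 \<le> 1 - gmu s" "1 - gmu s \<le> 1" "0 \<le> clp (2 - 3 * t)" "clp (2-3 * t) \<le> 1"
    using clp_range by (auto simp: gsig_def gmu_def)
  have "gsig s * (1 - gmu s) \<le> 1" using a by (simp add: mult_le_one)
  moreover have "0 \<le> gsig s * (1 - gmu s)" using a by simp
  ultimately show "0 \<le> GS s t" "GS s t \<le> 1" using a unfolding GS_def by (simp_all add: mult_le_one)
qed

lemma GT_range: "0 \<le> t \<Longrightarrow> t \<le> 1 \<Longrightarrow> 0 \<le> GT s t \<and> GT s t \<le> 1"
proof -
  assume t: "0 \<le> t" "t \<le> 1"
  have "0 \<le> gk s * t" using gk_range[of s] t by simp
  moreover have "0 \<le> gd s * (1 - t)" using gd_range[of s] t by simp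
  moreover have "0 \<le> glam s" using clp_range by (simp add: glam_def)
  ultimately show ?thesis unfolding GT_def by auto
qed


lemma Gam_length:
  fixes h :: "real \<times> real \<Rightarrow> 'a::metric_space"
  assumes s: "0 \<le> s" "s \<le> 1"
    and hb: "\<forall>\<tau>\<in>{0..1}. h (\<tau>, 0) = p \<and> h (\<tau>, 1) = p"
    and hr: "\<forall>t\<in>{0..1}. h (1, t) = p"
    and L3: "\<forall>\<tau>\<in>{0..1}. cvar (\<lambda>t. h (\<tau>, t)) 0 1 \<le> ereal L3"
    and L2: "cvar (\<lambda>t. h (0, t)) (1/2) 1 \<le> ereal L2"
  shows "cvar (\<lambda>t. h (GS s t, GT s t)) 0 1 \<le> ereal (L2 + L3)"
proof -
  define F where "F = (\<lambda>t. h (GS s t, GT s t))"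
  have L3pos: "0 \<le> L3" using L3 cvar_nonneg[of "\<lambda>t. h (0, t)" 0 1] by (metis atLeastAtMost_iff ereal_less_eq(5) order_trans zero_le_one order_refl)
  have L2pos: "0 \<le> L2" using L2 cvar_nonneg[of "\<lambda>t. h (0, t)" "1/2" 1] by (metis ereal_less_eq(5) order_trans)
  have A0: "cvar (\<lambda>t. h (0, t)) 0 1 \<le> ereal L3" using L3 by simp
  have sum1: "ereal L3 + ereal L2 = ereal (L2 + L3)" by simp
  have Fp: "cvar F a b \<le> 0" if "\<forall>t\<in>{a..b}. F t = p" for a b using that by (rule cvar_const)
  consider "s \<le> 1/5" | "1/5 \<le> s" "s \<le> 2/5" | "2/5 \<le> s" "s \<le> 4/5" | "4/5 \<le> s" by linarith
  then have "cvar F 0 1 \<le> ereal (L2 + L3)"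
  proof cases
    case 1
    have v: "gsig s = 0" "glam s = 0" "gmu s = 0" "gd s = 3/2"
      using 1 by (simp_all add: gsig_def glam_def gmu_def gd_def clp_low)
    define k where "k = gk s"
    have k: "1/2 \<le> k" "k \<le> 3" using gk_range unfolding k_def by auto
    have GTe: "GT s t = min (k * t) (min 1 (2 - 3/2 * t))" if "0 \<le> t" for t
    proof -
      have "0 \<le> k * t" using k that by simp
      moreover have "1/2 + 3/2 * (1 - t) = 2 - 3/2 * (t::real)" by (simp add: field_simps)
      ultimately show ?thesis unfolding GT_def v k_def[symmetric] by simp
    qed
    define m where "m = min 1 (4 / (2 * k + 3))"
    have m: "0 \<le> m" "m \<le> 1" using k unfolding m_def by auto
    have left: "\<forall>t\<in>{0..m}. F t = h (0, min (k * t) 1)"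
    proof
      fix t assume t: "t \<in> {0..m}"
      then have "t \<le> 4 / (2 * k + 3)" unfolding m_def by auto
      then have "t * (2 * k + 3) \<le> 4" using k by (simp add: le_divide_eq)
      then have "k * t \<le> 2 - 3/2 * t" by (simp add: algebra_simps)
      then have "GT s t = min (k * t) 1" using GTe[of t] t by (auto simp: min_def)
      then show "F t = h (0, min (k * t) 1)" unfolding F_def GS_def v by simp
    qed
    have right: "\<forall>t\<in>{m..1}. F t = h (0, min 1 (2 - 3/2 * t))"
    proof
      fix t assume t: "t \<in> {m..1}"
      have "2 - 3/2 * t \<le> k * t"
      proof (cases "4 / (2 * k + 3) \<le> t")
        case True
        then have "4 \<le> t * (2 * k + 3)" using k by (simp add: divide_le_eq)
        then show ?thesis by (simp add: algebra_simps)
      next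
        case False
        then have "t = 1" using t unfolding m_def by auto
        then show ?thesis using k by simp
      qed
      then have "GT s t = min 1 (2 - 3/2 * t)" using GTe[of t] t m by (auto simp: min_def)
      then show "F t = h (0, min 1 (2 - 3/2 * t))" unfolding F_def GS_def v by simp
    qed
    have c1: "cvar F 0 m \<le> cvar (\<lambda>t. h (0, t)) 0 1"
    proof (rule cvar_mono_comp[where g="\<lambda>t. min (k * t) 1" and f="\<lambda>t. h (0, t)", OF _ _ left])
      show "\<forall>u\<in>{0..m}. \<forall>v\<in>{0..m}. u \<le> v \<longrightarrow> min (k * u) 1 \<le> min (k * v) 1"
      proof (intro ballI impI)
        fix u v :: real assume "u \<le> v"
        then have "k * u \<le> k * v" using k by (simp add: mult_left_mono)
        then show "min (k * u) 1 \<le> min (k * v) 1" by (auto simp: min_def)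
      qed
      show "(\<lambda>t. min (k * t) 1) ` {0..m} \<subseteq> {0..1}" using k by auto
    qed
    have c2: "cvar F m 1 \<le> cvar (\<lambda>t. h (0, t)) (1/2) 1"
    proof (rule cvar_anti_comp[where g="\<lambda>t. min 1 (2 - 3/2 * t)" and f="\<lambda>t. h (0, t)", OF _ _ right])
      show "\<forall>u\<in>{m..1}. \<forall>v\<in>{m..1}. u \<le> v \<longrightarrow> min 1 (2 - 3/2 * v) \<le> min 1 (2 - 3/2 * u)"
        by auto
      show "(\<lambda>t. min 1 (2 - 3/2 * t)) ` {m..1} \<subseteq> {1/2..1}" using m by auto
    qed
    have "cvar F 0 1 \<le> cvar F 0 m + cvar F m 1" using m by (intro cvar_split)
    also have "\<dots> \<le> ereal L3 + ereal L2" using c1 c2 A0 L2 by (intro add_mono) auto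
    finally show ?thesis using sum1 by (simp add: add.commute)
  next
    case 2
    have v: "gk s = 3" "glam s = 0" "gmu s = 0" "gd s = 3/2"
      using 2 by (simp_all add: gk_def glam_def gmu_def gd_def clp_low clp_high)
    define \<sigma> where "\<sigma> = gsig s"
    have \<sigma>: "0 \<le> \<sigma>" "\<sigma> \<le> 1" using clp_range unfolding \<sigma>_def gsig_def by auto
    have GSe: "GS s t = \<sigma> * clp (2 - 3 * t)" for t unfolding GS_def v \<sigma>_def by simp
    have GTe: "GT s t = min (3 * t) (min 1 (2 - 3/2 * t))" if "0 \<le> t" for t
    proof -
      have "1/2 + 3/2 * (1 - t) = 2 - 3/2 * (t::real)" by (simp add: field_simps)
      then show ?thesis unfolding GT_def v using that by simp
    qed
    have p1: "\<forall>t\<in>{0..1/3}. F t = h (\<sigma>, 3 * t)"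
    proof
      fix t :: real assume t: "t \<in> {0..1/3}"
      then have "GS s t = \<sigma>" unfolding GSe by (simp add: clp_high)
      moreover have "GT s t = 3 * t" using t GTe[of t] by (auto simp: min_def)
      ultimately show "F t = h (\<sigma>, 3 * t)" unfolding F_def by simp
    qed
    have p2: "\<forall>t\<in>{1/3..2/3}. F t = p"
    proof
      fix t :: real assume t: "t \<in> {1/3..2/3}"
      then have "GT s t = 1" using GTe[of t] by (auto simp: min_def)
      then show "F t = p" unfolding F_def using hb GS_range[of s t] by auto
    qed
    have p3: "\<forall>t\<in>{2/3..1}. F t = h (0, 2 - 3/2 * t)"
    proof
      fix t :: real assume t: "t \<in> {2/3..1}"
      then have "GS s t = 0" unfolding GSe by (simp add: clp_low)
      moreover have "GT s t = 2 - 3/2 * t" using t GTe[of t] by (auto simp: min_def)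
      ultimately show "F t = h (0, 2 - 3/2 * t)" unfolding F_def by simp
    qed
    have c1: "cvar F 0 (1/3) \<le> cvar (\<lambda>t. h (\<sigma>, t)) 0 1"
      by (rule cvar_mono_comp[where g="\<lambda>t. 3 * t" and f="\<lambda>t. h (\<sigma>, t)", OF _ _ p1]) auto
    have c3: "cvar F (2/3) 1 \<le> cvar (\<lambda>t. h (0, t)) (1/2) 1"
      by (rule cvar_anti_comp[where g="\<lambda>t. 2 - 3/2 * t" and f="\<lambda>t. h (0, t)", OF _ _ p3]) auto
    have "cvar F 0 1 \<le> cvar F 0 (1/3) + cvar F (1/3) 1" by (intro cvar_split) auto
    also have "\<dots> \<le> cvar F 0 (1/3) + (cvar F (1/3) (2/3) + cvar F (2/3) 1)"
      by (intro add_mono order_refl cvar_split) auto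
    also have "\<dots> \<le> ereal L3 + (0 + ereal L2)"
    proof (intro add_mono)
      show "cvar F 0 (1/3) \<le> ereal L3" using c1 L3 \<sigma> by (meson atLeastAtMost_iff order_trans)
      show "cvar F (1/3) (2/3) \<le> 0" by (rule Fp[OF p2])
      show "cvar F (2/3) 1 \<le> ereal L2" using c3 L2 by (rule order_trans)
    qed
    finally show ?thesis using sum1 by (simp add: add.commute)
  next
    case 3
    have v: "gk s = 3" "gsig s = 1" "gd s = 3/2"
      using 3 by (simp_all add: gk_def gsig_def gd_def clp_low clp_high)
    have e32: "\<And>t::real. 1/2 + 3/2 * (1 - t) = 2 - 3/2 * t" by (simp add: field_simps)
    have lam: "0 \<le> glam s" "glam s \<le> 1" using clp_range unfolding glam_def by auto
    have p1: "\<forall>t\<in>{0..2/3}. F t = p"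
    proof
      fix t :: real assume t: "t \<in> {0..2/3}"
      have "GS s t = 1 \<or> GT s t = 1"
      proof (cases "s \<le> 3/5")
        case True
        then have "gmu s = 0" by (simp add: gmu_def clp_low)
        then have GSe: "GS s t = clp (2 - 3 * t)" unfolding GS_def v by simp
        show ?thesis
        proof (cases "t \<le> 1/3")
          case True
          then show ?thesis unfolding GSe by (simp add: clp_high)
        next
          case False
          then have "GT s t = 1" unfolding GT_def v e32 using t by (auto simp: min_def max_def)
          then show ?thesis by simp
        qed
      next
        case False
        then have "glam s = 1" by (simp add: glam_def clp_high)
        then have "GT s t = 1" unfolding GT_def v e32 using t by (auto simp: min_def max_def)
        then show ?thesis by simp
      qed
      then show "F t = p" unfolding F_def using hb hr GS_range[of s t] GT_range[of t s] t by auto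
    qed
    have p2: "\<forall>t\<in>{2/3..1}. F t = h (0, 2 - 3/2 * t)"
    proof
      fix t :: real assume t: "t \<in> {2/3..1}"
      then have "GS s t = 0" unfolding GS_def by (simp add: clp_low)
      moreover have "1/2 + 3/2 * (1 - t) = 2 - 3/2 * (t::real)" by (simp add: field_simps)
      then have "GT s t = 2 - 3/2 * t" unfolding GT_def v using t lam
        by (auto simp: min_def max_def)
      ultimately show "F t = h (0, 2 - 3/2 * t)" unfolding F_def by simp
    qed
    have c2: "cvar F (2/3) 1 \<le> cvar (\<lambda>t. h (0, t)) (1/2) 1"
      by (rule cvar_anti_comp[where g="\<lambda>t. 2 - 3/2 * t" and f="\<lambda>t. h (0, t)", OF _ _ p2]) auto
    have "cvar F 0 1 \<le> cvar F 0 (2/3) + cvar F (2/3) 1" by (intro cvar_split) auto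
    also have "\<dots> \<le> 0 + ereal L2" using c2 L2 Fp[OF p1] by (intro add_mono) auto
    finally show ?thesis using L3pos by (simp add: order_trans)
  next
    case 4
    have v: "gk s = 3" "gsig s = 1" "gmu s = 1" "glam s = 1"
      using 4 by (simp_all add: gk_def gsig_def gmu_def glam_def clp_high)
    define d where "d = gd s"
    have d: "1/2 \<le> d" "d \<le> 3/2" using gd_range unfolding d_def by auto
    have p: "\<forall>t\<in>{0..1}. F t = h (0, min 1 (1/2 + d * (1 - t)))"
    proof
      fix t :: real assume t: "t \<in> {0..1}"
      have "GS s t = 0" unfolding GS_def v by simp
      moreover have "GT s t = min 1 (1/2 + d * (1 - t))" unfolding GT_def v d_def[symmetric]
        using t by (auto simp: min_def max_def)
      ultimately show "F t = h (0, min 1 (1/2 + d * (1 - t)))" unfolding F_def by simp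
    qed
    have "cvar F 0 1 \<le> cvar (\<lambda>t. h (0, t)) (1/2) 1"
    proof (rule cvar_anti_comp[where g="\<lambda>t. min 1 (1/2 + d * (1 - t))" and f="\<lambda>t. h (0, t)", OF _ _ p])
      show "\<forall>u\<in>{0..1}. \<forall>v\<in>{0..1}. u \<le> v \<longrightarrow> min 1 (1/2 + d * (1 - v)) \<le> min 1 (1/2 + d * (1 - u))"
      proof (intro ballI impI)
        fix u v :: real assume "u \<le> v"
        then have "d * (1 - v) \<le> d * (1 - u)" using d by (simp add: mult_left_mono)
        then show "min 1 (1/2 + d * (1 - v)) \<le> min 1 (1/2 + d * (1 - u))" by (auto simp: min_def)
      qed
      show "(\<lambda>t. min 1 (1/2 + d * (1 - t))) ` {0..1} \<subseteq> {1/2..1}" using d by auto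
    qed
    then show ?thesis using L2 L3pos by (meson ereal_less_eq(3) le_add_same_cancel1 order_trans)
  qed
  then show ?thesis unfolding F_def .
qed


definition Gm :: "real \<times> real \<Rightarrow> real \<times> real" where
  "Gm st = (GS (fst st) (snd st), GT (fst st) (snd st))"

lemma Gm_cont: "continuous_on UNIV Gm"
  unfolding Gm_def GS_def GT_def gsig_def gmu_def gk_def glam_def gd_def clp_def
  by (intro continuous_intros)

lemma Gm_range: "st \<in> {0..1} \<times> {0..1} \<Longrightarrow> Gm st \<in> {0..1} \<times> {0..1}"
  using GS_range GT_range by (auto simp: Gm_def)

lemma Gm_s0: "0 \<le> t \<Longrightarrow> t \<le> 1 \<Longrightarrow> Gm (0, t) = (0, t / 2)"
proof -
  assume t: "0 \<le> t" "t \<le> 1"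
  have v: "gsig 0 = 0" "gmu 0 = 0" "gk 0 = 1/2" "glam 0 = 0" "gd 0 = 3/2"
    by (simp_all add: gsig_def gmu_def gk_def glam_def gd_def clp_low)
  have e: "1/2 + 3/2 * (1 - t) = 2 - 3/2 * t" by (simp add: field_simps)
  have "GT 0 t = t / 2" unfolding GT_def v e using t by (auto simp: min_def max_def)
  then show ?thesis by (simp add: Gm_def GS_def v)
qed

lemma Gm_s1: "0 \<le> t \<Longrightarrow> t \<le> 1 \<Longrightarrow> Gm (1, t) = (0, 1 - t / 2)"
proof -
  assume t: "0 \<le> t" "t \<le> 1"
  have v: "gsig 1 = 1" "gmu 1 = 1" "gk 1 = 3" "glam 1 = 1" "gd 1 = 1/2"
    by (simp_all add: gsig_def gmu_def gk_def glam_def gd_def clp_high clp_low)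
  have "GT 1 t = 1 - t / 2" unfolding GT_def v using t by (auto simp: min_def max_def field_simps)
  then show ?thesis by (simp add: Gm_def GS_def v)
qed

lemma Gm_t1: "Gm (s, 1) = (0, 1/2)"
proof -
  have "GT s 1 = 1/2" unfolding GT_def using gk_range[of s] by (auto simp: min_def max_def)
  moreover have "GS s 1 = 0" unfolding GS_def by (simp add: clp_low)
  ultimately show ?thesis by (simp add: Gm_def)
qed

lemma Gm_t0:
  assumes "\<forall>\<tau>\<in>{0..1}. h (\<tau>, 0) = p \<and> h (\<tau>, 1) = p" "\<forall>t\<in>{0..1}. h (1, t) = p"
  shows "h (Gm (s, 0)) = p"
proof -
  have GT0: "GT s 0 = glam s"
    unfolding GT_def using gd_range[of s] clp_range[of "5 * s - 2"] by (auto simp: glam_def min_def max_def)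
  have lam: "0 \<le> glam s" "glam s \<le> 1" using clp_range unfolding glam_def by auto
  have GS0: "GS s 0 = gsig s * (1 - gmu s)" unfolding GS_def by (simp add: clp_high)
  show ?thesis
  proof (cases "glam s = 0")
    case True
    then show ?thesis using assms(1) GS_range[of s 0] by (simp add: Gm_def GT0)
  next
    case False
    then have "5 * s - 2 > 0" by (metis clp_low glam_def not_less)
    then have sig: "gsig s = 1" by (simp add: gsig_def clp_high)
    show ?thesis
    proof (cases "gmu s = 0")
      case True
      then show ?thesis using assms(2) lam by (simp add: Gm_def GT0 GS0 sig)
    next
      case False
      then have "5 * s - 3 > 0" by (metis clp_low gmu_def not_less)
      then have "glam s = 1" by (simp add: glam_def clp_high)
      then show ?thesis using assms(1) GS_range[of s 0] by (simp add: Gm_def GT0)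
    qed
  qed
qed


lemma core:
  fixes H :: "'b::topological_space \<Rightarrow> real \<times> real \<Rightarrow> 'a::metric_space"
  assumes Hc: "continuous_on (X \<times> ({0..1} \<times> {0..1})) (\<lambda>(x, st). H x st)"
    and H0: "\<forall>x\<in>X. \<forall>t\<in>{0..1}. H x (0, t) = (e1 x +++ reversepath (e2 x)) t \<and> H x (1, t) = p1 x"
    and Hb: "\<forall>x\<in>X. \<forall>\<tau>\<in>{0..1}. H x (\<tau>, 0) = p1 x \<and> H x (\<tau>, 1) = p1 x \<and>
               curve_length (\<lambda>t. H x (\<tau>, t)) \<le> ereal (l3 x)"
    and e: "\<forall>x\<in>X. pathfinish (e1 x) = p2 x \<and> pathfinish (e2 x) = p2 x \<and> curve_length (e2 x) = ereal (l2 x)"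
    and B: "\<forall>x\<in>X. l2 x + l3 x \<le> B"
  shows "\<exists>K. continuous_on (X \<times> ({0..1} \<times> {0..1})) (\<lambda>(x, st). K x st) \<and>
          (\<forall>x\<in>X. (\<forall>t\<in>{0..1}. K x (0, t) = e1 x t \<and> K x (1, t) = e2 x t) \<and>
                  (\<forall>s::real\<in>{0..1}. K x (s, 0) = p1 x \<and> K x (s, 1) = p2 x \<and>
                               curve_length (\<lambda>t. K x (s, t)) \<le> ereal B))"
proof -
  define K where "K = (\<lambda>x st. H x (Gm st))"
  have c1: "continuous_on (X \<times> ({0..1::real} \<times> {0..1::real})) (\<lambda>z. (fst z, Gm (snd z)))"
    by (intro continuous_intros continuous_on_compose2[OF Gm_cont]) auto
  have "continuous_on (X \<times> ({0..1} \<times> {0..1})) (\<lambda>z. (\<lambda>(x, st). H x st) ((\<lambda>z. (fst z, Gm (snd z))) z))"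
  proof (rule continuous_on_compose2[OF Hc c1], rule subsetI)
    fix w assume "w \<in> (\<lambda>z. (fst z, Gm (snd z))) ` (X \<times> ({0..1} \<times> {0..1}))"
    then obtain z where z: "z \<in> X \<times> ({0..1} \<times> {0..1})" "w = (fst z, Gm (snd z))" by blast
    have "snd z \<in> {0..1} \<times> {0..1}" "fst z \<in> X" using z(1) by (auto simp: mem_Times_iff)
    then show "w \<in> X \<times> ({0..1} \<times> {0..1})" using Gm_range[of "snd z"] z(2) by (simp add: mem_Times_iff)
  qed
  then have cont: "continuous_on (X \<times> ({0..1} \<times> {0..1})) (\<lambda>(x, st). K x st)"
    unfolding K_def by (simp add: case_prod_unfold)
  have props: "(\<forall>t\<in>{0..1}. K x (0, t) = e1 x t \<and> K x (1, t) = e2 x t) \<and>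
                  (\<forall>s\<in>{0..1}. K x (s, 0) = p1 x \<and> K x (s, 1) = p2 x \<and>
                               curve_length (\<lambda>t. K x (s, t)) \<le> ereal B)" if x: "x \<in> X" for x
  proof (intro conjI ballI)
    fix t :: real assume t: "t \<in> {0..1}"
    have "H x (0, t / 2) = (e1 x +++ reversepath (e2 x)) (t / 2)" using H0 x t by auto
    then show "K x (0, t) = e1 x t" using t by (simp add: K_def Gm_s0 joinpaths_def)
    have "H x (0, 1 - t / 2) = (e1 x +++ reversepath (e2 x)) (1 - t / 2)" using H0 x t by auto
    moreover have "(e1 x +++ reversepath (e2 x)) (1 - t / 2) = e2 x t"
    proof (cases "t = 1")
      case True
      then show ?thesis using e x by (simp add: joinpaths_def pathfinish_def)
    next
      case False
      then have "\<not> 1 - t / 2 \<le> 1/2" using t by auto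
      then show ?thesis by (simp add: joinpaths_def reversepath_def algebra_simps)
    qed
    ultimately show "K x (1, t) = e2 x t" using t by (simp add: K_def Gm_s1)
  next
    fix s :: real assume s: "s \<in> {0..1}"
    have hb: "\<forall>\<tau>\<in>{0..1}. H x (\<tau>, 0) = p1 x \<and> H x (\<tau>, 1) = p1 x" using Hb x by auto
    have hr: "\<forall>t\<in>{0..1}. H x (1, t) = p1 x" using H0 x by auto
    show "K x (s, 0) = p1 x" unfolding K_def by (rule Gm_t0[OF hb hr])
    have "H x (0, 1/2) = (e1 x +++ reversepath (e2 x)) (1/2)" using H0 x by auto
    then show "K x (s, 1) = p2 x" using e x by (simp add: K_def Gm_t1 joinpaths_def pathfinish_def)
    have L3: "\<forall>\<tau>\<in>{0..1}. cvar (\<lambda>t. H x (\<tau>, t)) 0 1 \<le> ereal (l3 x)"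
      using Hb x by (simp add: curve_length_cvar)
    have eq2: "\<forall>t\<in>{1/2..1}. H x (0, t) = e2 x (2 - 2 * t)"
    proof
      fix t :: real assume t: "t \<in> {1/2..1}"
      then have "H x (0, t) = (e1 x +++ reversepath (e2 x)) t" using H0 x by auto
      moreover have "(e1 x +++ reversepath (e2 x)) t = e2 x (2 - 2 * t)"
      proof (cases "t = 1/2")
        case True
        show ?thesis unfolding True using e x by (simp add: joinpaths_def pathfinish_def)
      next
        case False
        then have "\<not> t \<le> 1/2" using t by auto
        then show ?thesis by (simp add: joinpaths_def reversepath_def algebra_simps)
      qed
      ultimately show "H x (0, t) = e2 x (2 - 2 * t)" by simp
    qed
    have "cvar (\<lambda>t. H x (0, t)) (1/2) 1 \<le> cvar (e2 x) 0 1"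
      by (rule cvar_anti_comp[where g="\<lambda>t. 2 - 2 * t" and f="e2 x", OF _ _ eq2]) auto
    also have "\<dots> = ereal (l2 x)" using e x by (simp add: curve_length_cvar)
    finally have L2: "cvar (\<lambda>t. H x (0, t)) (1/2) 1 \<le> ereal (l2 x)" .
    have "cvar (\<lambda>t. H x (GS s t, GT s t)) 0 1 \<le> ereal (l2 x + l3 x)"
      using s by (intro Gam_length[OF _ _ hb hr L3 L2]) auto
    also have "\<dots> \<le> ereal B" using B x by simp
    finally show "curve_length (\<lambda>t. K x (s, t)) \<le> ereal B"
      by (simp add: K_def Gm_def curve_length_cvar)
  qed
  show ?thesis
    apply (rule exI[of _ K])
    apply (rule conjI[OF cont])
    using props by blast
qed


lemma core2:
  fixes H :: "'b::topological_space \<Rightarrow> real \<times> real \<Rightarrow> 'a::metric_space"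

  assumes Hc: "continuous_on (X \<times> ({0..1} \<times> {0..1})) (\<lambda>(x, st). H x st)"
    and H0: "\<forall>x\<in>X. \<forall>t\<in>{0..1}. H x (0, t) = (e1 x +++ reversepath (e2 x)) t \<and> H x (1, t) = p1 x"
    and Hb: "\<forall>x\<in>X. \<forall>\<tau>\<in>{0..1}. H x (\<tau>, 0) = p1 x \<and> H x (\<tau>, 1) = p1 x \<and>
               curve_length (\<lambda>t. H x (\<tau>, t)) \<le> ereal (l3 x)"
    and e: "\<forall>x\<in>X. pathfinish (e1 x) = p2 x \<and> pathfinish (e2 x) = p2 x \<and> curve_length (e1 x) = ereal (l1 x)"
    and B: "\<forall>x\<in>X. l1 x + l3 x \<le> B"
  shows "\<exists>K. continuous_on (X \<times> ({0..1} \<times> {0..1})) (\<lambda>(x, st). K x st) \<and>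
          (\<forall>x\<in>X. (\<forall>t\<in>{0..1}. K x (0, t) = e1 x t \<and> K x (1, t) = e2 x t) \<and>
                  (\<forall>s::real\<in>{0..1}. K x (s, 0) = p1 x \<and> K x (s, 1) = p2 x \<and>
                               curve_length (\<lambda>t. K x (s, t)) \<le> ereal B))"
proof -
  define H' where "H' = (\<lambda>x st. H x (fst st, 1 - snd st))"
  have c1: "continuous_on (X \<times> ({0..1::real} \<times> {0..1::real})) (\<lambda>z. (fst z, (fst (snd z), 1 - snd (snd z))))"
    by (intro continuous_intros continuous_on_diff[where f="\<lambda>_. 1"])
  have "continuous_on (X \<times> ({0..1} \<times> {0..1}))
          (\<lambda>z. (\<lambda>(x, st). H x st) ((\<lambda>z. (fst z, (fst (snd z), 1 - snd (snd z)))) z))"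
    by (rule continuous_on_compose2[OF Hc c1]) (auto simp: mem_Times_iff)
  then have Hc': "continuous_on (X \<times> ({0..1} \<times> {0..1})) (\<lambda>(x, st). H' x st)"
    unfolding H'_def by (simp add: case_prod_unfold)
  have H0': "\<forall>x\<in>X. \<forall>t\<in>{0..1}. H' x (0, t) = (e2 x +++ reversepath (e1 x)) t \<and> H' x (1, t) = p1 x"
  proof (intro ballI conjI)
    fix x t assume x: "x \<in> X" and t: "t \<in> {0..1::real}"
    have "H' x (0, t) = (e1 x +++ reversepath (e2 x)) (1 - t)" using H0 x t by (simp add: H'_def)
    also have "\<dots> = reversepath (e1 x +++ reversepath (e2 x)) t" by (simp add: reversepath_def)
    also have "\<dots> = (e2 x +++ reversepath (e1 x)) t"
      using e x by (simp add: reversepath_joinpaths)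
    finally show "H' x (0, t) = (e2 x +++ reversepath (e1 x)) t" .
    show "H' x (1, t) = p1 x" using H0 x t by (simp add: H'_def)
  qed
  have Hb': "\<forall>x\<in>X. \<forall>\<tau>\<in>{0..1}. H' x (\<tau>, 0) = p1 x \<and> H' x (\<tau>, 1) = p1 x \<and>
               curve_length (\<lambda>t. H' x (\<tau>, t)) \<le> ereal (l3 x)"
  proof (intro ballI conjI)
    fix x \<tau> assume x: "x \<in> X" and \<tau>: "\<tau> \<in> {0..1::real}"
    show "H' x (\<tau>, 0) = p1 x" "H' x (\<tau>, 1) = p1 x" using Hb x \<tau> by (simp_all add: H'_def)
    have "cvar (\<lambda>t. H' x (\<tau>, t)) 0 1 \<le> cvar (\<lambda>t. H x (\<tau>, t)) 0 1"
      by (rule cvar_anti_comp[where g="\<lambda>t. 1 - t" and f="\<lambda>t. H x (\<tau>, t)"]) (auto simp: H'_def)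
    also have "\<dots> \<le> ereal (l3 x)" using Hb x \<tau> by (simp add: curve_length_cvar)
    finally show "curve_length (\<lambda>t. H' x (\<tau>, t)) \<le> ereal (l3 x)" by (simp add: curve_length_cvar)
  qed
  have e': "\<forall>x\<in>X. pathfinish (e2 x) = p2 x \<and> pathfinish (e1 x) = p2 x \<and> curve_length (e1 x) = ereal (l1 x)"
    using e by auto
  obtain K' where K': "continuous_on (X \<times> ({0..1} \<times> {0..1})) (\<lambda>(x, st). K' x st)"
    "\<forall>x\<in>X. (\<forall>t\<in>{0..1}. K' x (0, t) = e2 x t \<and> K' x (1, t) = e1 x t) \<and>
                  (\<forall>s::real\<in>{0..1}. K' x (s, 0) = p1 x \<and> K' x (s, 1) = p2 x \<and>
                               curve_length (\<lambda>t. K' x (s, t)) \<le> ereal B)"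
    using core[OF Hc' H0' Hb' e' B] by blast
  define K where "K = (\<lambda>x st. K' x (1 - fst st, snd st))"
  have c2: "continuous_on (X \<times> ({0..1::real} \<times> {0..1::real})) (\<lambda>z. (fst z, (1 - fst (snd z), snd (snd z))))"
    by (intro continuous_intros continuous_on_diff[where f="\<lambda>_. 1"])
  have "continuous_on (X \<times> ({0..1} \<times> {0..1}))
          (\<lambda>z. (\<lambda>(x, st). K' x st) ((\<lambda>z. (fst z, (1 - fst (snd z), snd (snd z)))) z))"
    by (rule continuous_on_compose2[OF K'(1) c2]) (auto simp: mem_Times_iff)
  then have cont: "continuous_on (X \<times> ({0..1} \<times> {0..1})) (\<lambda>(x, st). K x st)"
    unfolding K_def by (simp add: case_prod_unfold)
  have props: "(\<forall>t\<in>{0..1}. K x (0, t) = e1 x t \<and> K x (1, t) = e2 x t) \<and>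
                  (\<forall>s::real\<in>{0..1}. K x (s, 0) = p1 x \<and> K x (s, 1) = p2 x \<and>
                               curve_length (\<lambda>t. K x (s, t)) \<le> ereal B)" if x: "x \<in> X" for x
    using K'(2) x by (auto simp: K_def)
  show ?thesis
    apply (rule exI[of _ K])
    apply (rule conjI[OF cont])
    using props by blast
qed

lemma both:
  fixes H :: "'b::topological_space \<Rightarrow> real \<times> real \<Rightarrow> 'a::metric_space"

  assumes Hc: "continuous_on (X \<times> ({0..1} \<times> {0..1})) (\<lambda>(x, st). H x st)"
    and H0: "\<forall>x\<in>X. \<forall>t\<in>{0..1}. H x (0, t) = (e1 x +++ reversepath (e2 x)) t \<and> H x (1, t) = p1 x"
    and Hb: "\<forall>x\<in>X. \<forall>\<tau>\<in>{0..1}. H x (\<tau>, 0) = p1 x \<and> H x (\<tau>, 1) = p1 x \<and>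
               curve_length (\<lambda>t. H x (\<tau>, t)) \<le> ereal (l3 x)"
    and e: "\<forall>x\<in>X. pathfinish (e1 x) = p2 x \<and> pathfinish (e2 x) = p2 x \<and>
              curve_length (e1 x) = ereal (l1 x) \<and> curve_length (e2 x) = ereal (l2 x)"
    and B: "(\<forall>x\<in>X. l1 x + l3 x \<le> B) \<or> (\<forall>x\<in>X. l2 x + l3 x \<le> B)"
  shows "\<exists>K. continuous_on (X \<times> ({0..1} \<times> {0..1})) (\<lambda>(x, st). K x st) \<and>
          (\<forall>x\<in>X. (\<forall>t\<in>{0..1}. K x (0, t) = e1 x t \<and> K x (1, t) = e2 x t) \<and>
                  (\<forall>s::real\<in>{0..1}. K x (s, 0) = p1 x \<and> K x (s, 1) = p2 x \<and>
                               curve_length (\<lambda>t. K x (s, t)) \<le> ereal B))"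
  using B
proof
  assume "\<forall>x\<in>X. l1 x + l3 x \<le> B"
  moreover have "\<forall>x\<in>X. pathfinish (e1 x) = p2 x \<and> pathfinish (e2 x) = p2 x \<and> curve_length (e1 x) = ereal (l1 x)"
    using e by auto
  ultimately show ?thesis using core2[OF Hc H0 Hb] by blast
next
  assume "\<forall>x\<in>X. l2 x + l3 x \<le> B"
  moreover have "\<forall>x\<in>X. pathfinish (e1 x) = p2 x \<and> pathfinish (e2 x) = p2 x \<and> curve_length (e2 x) = ereal (l2 x)"
    using e by auto
  ultimately show ?thesis using core[OF Hc H0 Hb] by blast
qed

lemma part2:
  fixes X :: "'b::topological_space set" and e1 e2 :: "'b \<Rightarrow> real \<Rightarrow> 'a::metric_space"
    and p1 p2 :: "'b \<Rightarrow> 'a" and l1 l2 l3 :: "'b \<Rightarrow> real" and H :: "'b \<Rightarrow> real \<times> real \<Rightarrow> 'a"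
    and B :: real
  assumes A: "continuous_on (X \<times> {0..1}) (\<lambda>(x, t). e1 x t) \<and>
      continuous_on (X \<times> {0..1}) (\<lambda>(x, t). e2 x t) \<and>
      (\<forall>x\<in>X. pathstart (e1 x) = p1 x \<and> pathfinish (e1 x) = p2 x \<and>
              pathstart (e2 x) = p1 x \<and> pathfinish (e2 x) = p2 x \<and>
              curve_length (e1 x) = ereal (l1 x) \<and> curve_length (e2 x) = ereal (l2 x)) \<and>
      continuous_on (X \<times> ({0..1} \<times> {0..1})) (\<lambda>(x, st). H x st) \<and>
      (\<forall>x\<in>X. (\<forall>t\<in>{0..1}. H x (0, t) = (e1 x +++ reversepath (e2 x)) t \<and> H x (1, t) = p1 x) \<and>
              (\<forall>\<tau>\<in>{0..1}. H x (\<tau>, 0) = p1 x \<and> H x (\<tau>, 1) = p1 x \<and>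
                            curve_length (\<lambda>t. H x (\<tau>, t)) \<le> ereal (l3 x))) \<and>
      ((\<forall>x\<in>X. l1 x + l3 x \<le> B) \<or> (\<forall>x\<in>X. l2 x + l3 x \<le> B))"
  shows "(\<exists>K::'b \<Rightarrow> real \<times> real \<Rightarrow> 'a.
          continuous_on (X \<times> ({0..1} \<times> {0..1})) (\<lambda>(x, st). K x st) \<and>
          (\<forall>x\<in>X. (\<forall>t\<in>{0..1}. K x (0, t) = e1 x t \<and> K x (1, t) = e2 x t) \<and>
                  (\<forall>s\<in>{0..1}. K x (s, 0) = p1 x \<and> K x (s, 1) = p2 x \<and>
                               curve_length (\<lambda>t. K x (s, t)) \<le> ereal B)))"
proof -
  have Hc: "continuous_on (X \<times> ({0..1} \<times> {0..1})) (\<lambda>(x, st). H x st)" using A by blast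
  have H0: "\<forall>x\<in>X. \<forall>t\<in>{0..1}. H x (0, t) = (e1 x +++ reversepath (e2 x)) t \<and> H x (1, t) = p1 x"
    using A by blast
  have Hb: "\<forall>x\<in>X. \<forall>\<tau>\<in>{0..1}. H x (\<tau>, 0) = p1 x \<and> H x (\<tau>, 1) = p1 x \<and>
               curve_length (\<lambda>t. H x (\<tau>, t)) \<le> ereal (l3 x)" using A by blast
  have e: "\<forall>x\<in>X. pathfinish (e1 x) = p2 x \<and> pathfinish (e2 x) = p2 x \<and>
              curve_length (e1 x) = ereal (l1 x) \<and> curve_length (e2 x) = ereal (l2 x)" using A by blast
  have B: "(\<forall>x\<in>X. l1 x + l3 x \<le> B) \<or> (\<forall>x\<in>X. l2 x + l3 x \<le> B)" using A by blast
  show ?thesis using both[OF Hc H0 Hb e B] by blast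
qed

lemma part1:
  fixes e1 e2 :: "real \<Rightarrow> 'a::metric_space" and p1 p2 :: 'a and l1 l2 l3 :: real
    and H :: "real \<times> real \<Rightarrow> 'a"
  assumes A: "path e1 \<and> path e2 \<and> pathstart e1 = p1 \<and> pathfinish e1 = p2 \<and>
      pathstart e2 = p1 \<and> pathfinish e2 = p2 \<and>
      curve_length e1 = ereal l1 \<and> curve_length e2 = ereal l2 \<and>
      continuous_on ({0..1} \<times> {0..1}) H \<and>
      (\<forall>t\<in>{0..1}. H (0, t) = (e1 +++ reversepath e2) t \<and> H (1, t) = p1) \<and>
      (\<forall>\<tau>\<in>{0..1}. H (\<tau>, 0) = p1 \<and> H (\<tau>, 1) = p1 \<and>
                    curve_length (\<lambda>t. H (\<tau>, t)) \<le> ereal l3)"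
  shows "(\<exists>K::real \<times> real \<Rightarrow> 'a. continuous_on ({0..1} \<times> {0..1}) K \<and>
          (\<forall>t\<in>{0..1}. K (0, t) = e1 t \<and> K (1, t) = e2 t) \<and>
          (\<forall>s\<in>{0..1}. K (s, 0) = p1 \<and> K (s, 1) = p2 \<and>
                       curve_length (\<lambda>t. K (s, t)) \<le> ereal (min l1 l2 + l3)))"
proof -
  let ?X = "{0::real}"
  have Hc0: "continuous_on ({0..1} \<times> {0..1}) H" using A by blast
  have "continuous_on (?X \<times> ({0..1} \<times> {0..1})) (\<lambda>z. H (snd z))"
    by (rule continuous_on_compose2[OF Hc0 continuous_on_snd]) auto
  then have Hc: "continuous_on (?X \<times> ({0..1} \<times> {0..1})) (\<lambda>(x, st). (\<lambda>_. H) x st)"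
    by (simp add: case_prod_unfold)
  have H0: "\<forall>x\<in>?X. \<forall>t\<in>{0..1}. (\<lambda>_. H) x (0, t) = ((\<lambda>_. e1) x +++ reversepath ((\<lambda>_. e2) x)) t \<and> (\<lambda>_. H) x (1, t) = (\<lambda>_. p1) x"
    using A by simp
  have Hb: "\<forall>x\<in>?X. \<forall>\<tau>\<in>{0..1}. (\<lambda>_. H) x (\<tau>, 0) = (\<lambda>_. p1) x \<and> (\<lambda>_. H) x (\<tau>, 1) = (\<lambda>_. p1) x \<and>
               curve_length (\<lambda>t. (\<lambda>_. H) x (\<tau>, t)) \<le> ereal ((\<lambda>_. l3) x)" using A by simp
  have e: "\<forall>x\<in>?X. pathfinish ((\<lambda>_. e1) x) = (\<lambda>_. p2) x \<and> pathfinish ((\<lambda>_. e2) x) = (\<lambda>_. p2) x \<and>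
              curve_length ((\<lambda>_. e1) x) = ereal ((\<lambda>_. l1) x) \<and> curve_length ((\<lambda>_. e2) x) = ereal ((\<lambda>_. l2) x)"
    using A by simp
  have B: "(\<forall>x\<in>?X. (\<lambda>_. l1) x + (\<lambda>_. l3) x \<le> min l1 l2 + l3) \<or> (\<forall>x\<in>?X. (\<lambda>_. l2) x + (\<lambda>_. l3) x \<le> min l1 l2 + l3)"
    by (simp add: min_def)
  obtain K' where K': "continuous_on (?X \<times> ({0..1} \<times> {0..1})) (\<lambda>(x, st). K' x st)"
    "\<forall>x\<in>?X. (\<forall>t\<in>{0..1}. K' x (0, t) = e1 t \<and> K' x (1, t) = e2 t) \<and>
                  (\<forall>s::real\<in>{0..1}. K' x (s, 0) = p1 \<and> K' x (s, 1) = p2 \<and>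
                               curve_length (\<lambda>t. K' x (s, t)) \<le> ereal (min l1 l2 + l3))"
    using both[OF Hc H0 Hb e B] by blast
  have c: "continuous_on ({0..1} \<times> {0..1}) (\<lambda>st. (0::real, st))" by (intro continuous_intros)
  have "continuous_on ({0..1} \<times> {0..1}) (\<lambda>st. (\<lambda>(x, st). K' x st) ((\<lambda>st. (0::real, st)) st))"
    by (rule continuous_on_compose2[OF K'(1) c]) auto
  then have cont: "continuous_on ({0..1} \<times> {0..1}) (K' 0)" by (simp add: case_prod_unfold)
  show ?thesis
    apply (rule exI[of _ "K' 0"])
    apply (rule conjI[OF cont])
    using K'(2) by blast
qed

theorem lemma4p3:
  shows
  "(\<forall>(e1::real \<Rightarrow> 'a::metric_space) e2 p1 p2 (l1::real) l2 l3 (H::real \<times> real \<Rightarrow> 'a).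
      path e1 \<and> path e2 \<and> pathstart e1 = p1 \<and> pathfinish e1 = p2 \<and>
      pathstart e2 = p1 \<and> pathfinish e2 = p2 \<and>
      curve_length e1 = ereal l1 \<and> curve_length e2 = ereal l2 \<and>
      continuous_on ({0..1} \<times> {0..1}) H \<and>
      (\<forall>t\<in>{0..1}. H (0, t) = (e1 +++ reversepath e2) t \<and> H (1, t) = p1) \<and>
      (\<forall>\<tau>\<in>{0..1}. H (\<tau>, 0) = p1 \<and> H (\<tau>, 1) = p1 \<and>
                    curve_length (\<lambda>t. H (\<tau>, t)) \<le> ereal l3)
    \<longrightarrow> (\<exists>K::real \<times> real \<Rightarrow> 'a. continuous_on ({0..1} \<times> {0..1}) K \<and>
          (\<forall>t\<in>{0..1}. K (0, t) = e1 t \<and> K (1, t) = e2 t) \<and>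
          (\<forall>s\<in>{0..1}. K (s, 0) = p1 \<and> K (s, 1) = p2 \<and>
                       curve_length (\<lambda>t. K (s, t)) \<le> ereal (min l1 l2 + l3))))
   \<and>
   (\<forall>(X::'b::topological_space set) (e1::'b \<Rightarrow> real \<Rightarrow> 'a) e2 p1 p2
       (l1::'b \<Rightarrow> real) l2 l3 (H::'b \<Rightarrow> real \<times> real \<Rightarrow> 'a) (B::real).
      continuous_on (X \<times> {0..1}) (\<lambda>(x, t). e1 x t) \<and>
      continuous_on (X \<times> {0..1}) (\<lambda>(x, t). e2 x t) \<and>
      (\<forall>x\<in>X. pathstart (e1 x) = p1 x \<and> pathfinish (e1 x) = p2 x \<and>
              pathstart (e2 x) = p1 x \<and> pathfinish (e2 x) = p2 x \<and>
              curve_length (e1 x) = ereal (l1 x) \<and> curve_length (e2 x) = ereal (l2 x)) \<and>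
      continuous_on (X \<times> ({0..1} \<times> {0..1})) (\<lambda>(x, st). H x st) \<and>
      (\<forall>x\<in>X. (\<forall>t\<in>{0..1}. H x (0, t) = (e1 x +++ reversepath (e2 x)) t \<and> H x (1, t) = p1 x) \<and>
              (\<forall>\<tau>\<in>{0..1}. H x (\<tau>, 0) = p1 x \<and> H x (\<tau>, 1) = p1 x \<and>
                            curve_length (\<lambda>t. H x (\<tau>, t)) \<le> ereal (l3 x))) \<and>
      ((\<forall>x\<in>X. l1 x + l3 x \<le> B) \<or> (\<forall>x\<in>X. l2 x + l3 x \<le> B))
    \<longrightarrow> (\<exists>K::'b \<Rightarrow> real \<times> real \<Rightarrow> 'a.
          continuous_on (X \<times> ({0..1} \<times> {0..1})) (\<lambda>(x, st). K x st) \<and>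
          (\<forall>x\<in>X. (\<forall>t\<in>{0..1}. K x (0, t) = e1 x t \<and> K x (1, t) = e2 x t) \<and>
                  (\<forall>s\<in>{0..1}. K x (s, 0) = p1 x \<and> K x (s, 1) = p2 x \<and>
                               curve_length (\<lambda>t. K x (s, t)) \<le> ereal B))))"
  apply (intro conjI allI impI)
   apply (erule part1)
  apply (erule part2)
  done

end
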